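(* Let $\sigma$ be a signature containing $\triangleright$, let $\mathcal{A}$ be a $\sigma$-algebra and let $\theta$ be a representation of $\mathcal{A}$ by partial functions. Then $\theta$ is atomic if and only if $\theta$ is locally complete.
   Context: Signatures $\sigma$ are sets of operation symbols drawn from: $\triangleright$ (antidomain restriction), $;$ (composition), $\wedge$ (intersection), $\mathrm{upd}$ (update), $\sqcup$ (preferential union), $\mathsf{D}$ (domain), $\mathsf{A}$ (antidomain), interpreted on partial functions as: $f \triangleright g = \{(x,y) \in g : x \notin \mathrm{dom}(f)\}$; $f;g$ = relational composition ($f$ first); $f\wedge g = f\cap g$; $\mathrm{upd}(f,g)(x)$ is $f(x)$ if $f(x)$ defined and $g(x)$ undefined, $g(x)$ if both defined, undefined otherwise; $(f\sqcup g)(x)$ is $f(x)$ if defined, else $g(x)$; $\mathsf{D}(f)$ = identity on $\mathrm{dom}(f)$; $\mathsf{A}(f)$ = identity on the complement of $\mathrm{dom}(f)$ in the base. A representation by partial functions is an isomorphism onto a $\sigma$-algebra of partial functions with these operations. Define $0 := a\triangleright a$, $a\lhd b := (a\triangleright b)\triangleright b$, $a \le b :\iff a\lhd b = a$; for representable algebras this is a partial order with least element $0$ and $a\le b \iff \theta(a)\subseteq\theta(b)$. An atom is a minimal nonzero element; $\mathrm{At}(\mathcal{A})$ is the set of atoms. $\theta$ is atomic if whenever $(x,y)\in\theta(a)$ there is an atom $b\le a$ with $(x,y)\in\theta(b)$. For $a\in\mathcal{A}$, ${\downarrow}a=\{b:b\le a\}$ is a Boolean algebra with bottom $0$, top $a$,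 meet $\lhd$ and complement $b\mapsto b\triangleright a$, and $\theta$ restricts to a representation of it as a field of sets over $\theta(a)$; $\theta$ is locally complete if for every $a$ this restriction is complete (sends every existing join to the union and every existing meet of a nonempty set to the intersection). *)

theory Defs
  imports Main
begin

datatype opsym = AntiRes | Comp | Meet | Upd | PrefUnion | DomOp | AntiDomOp

text \<open>A structure interpreting all symbols; a sigma-algebra only uses (and is
  closed under) the operations whose symbols lie in sigma.\<close>
record 'a alg =
  carrier :: "'a set"
  antires :: "'a \<Rightarrow> 'a \<Rightarrow> 'a"
  comp :: "'a \<Rightarrow> 'a \<Rightarrow> 'a"
  meet :: "'a \<Rightarrow> 'a \<Rightarrow> 'a"
  upd :: "'a \<Rightarrow> 'a \<Rightarrow> 'a"
  punion :: "'a \<Rightarrow> 'a \<Rightarrow> 'a"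
  dom_op :: "'a \<Rightarrow> 'a"
  adom_op :: "'a \<Rightarrow> 'a"

definition sigma_algebra :: "opsym set \<Rightarrow> 'a alg \<Rightarrow> bool" where
  "sigma_algebra \<sigma> \<A> \<longleftrightarrow>
     (AntiRes \<in> \<sigma> \<longrightarrow> (\<forall>a\<in>carrier \<A>. \<forall>b\<in>carrier \<A>. antires \<A> a b \<in> carrier \<A>)) \<and>
     (Comp \<in> \<sigma> \<longrightarrow> (\<forall>a\<in>carrier \<A>. \<forall>b\<in>carrier \<A>. comp \<A> a b \<in> carrier \<A>)) \<and>
     (Meet \<in> \<sigma> \<longrightarrow> (\<forall>a\<in>carrier \<A>. \<forall>b\<in>carrier \<A>. meet \<A> a b \<in> carrier \<A>)) \<and>
     (Upd \<in> \<sigma> \<longrightarrow> (\<forall>a\<in>carrier \<A>. \<forall>b\<in>carrier \<A>. upd \<A> a b \<in> carrier \<A>)) \<and>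
     (PrefUnion \<in> \<sigma> \<longrightarrow> (\<forall>a\<in>carrier \<A>. \<forall>b\<in>carrier \<A>. punion \<A> a b \<in> carrier \<A>)) \<and>
     (DomOp \<in> \<sigma> \<longrightarrow> (\<forall>a\<in>carrier \<A>. dom_op \<A> a \<in> carrier \<A>)) \<and>
     (AntiDomOp \<in> \<sigma> \<longrightarrow> (\<forall>a\<in>carrier \<A>. adom_op \<A> a \<in> carrier \<A>))"

definition pf_antires :: "('x \<times> 'x) set \<Rightarrow> ('x \<times> 'x) set \<Rightarrow> ('x \<times> 'x) set" where
  "pf_antires f g = {(x, y) \<in> g. x \<notin> Domain f}"

definition pf_upd :: "('x \<times> 'x) set \<Rightarrow> ('x \<times> 'x) set \<Rightarrow> ('x \<times> 'x) set" where
  "pf_upd f g = {(x, y) \<in> f. x \<notin> Domain g} \<union> {(x, y) \<in> g. x \<in> Domain f}"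

definition pf_punion :: "('x \<times> 'x) set \<Rightarrow> ('x \<times> 'x) set \<Rightarrow> ('x \<times> 'x) set" where
  "pf_punion f g = f \<union> {(x, y) \<in> g. x \<notin> Domain f}"

definition pf_dom :: "('x \<times> 'x) set \<Rightarrow> ('x \<times> 'x) set" where
  "pf_dom f = Id_on (Domain f)"

definition pf_adom :: "'x set \<Rightarrow> ('x \<times> 'x) set \<Rightarrow> ('x \<times> 'x) set" where
  "pf_adom X f = Id_on (X - Domain f)"

definition pf_representation ::
  "opsym set \<Rightarrow> 'a alg \<Rightarrow> 'x set \<Rightarrow> ('a \<Rightarrow> ('x \<times> 'x) set) \<Rightarrow> bool" where
  "pf_representation \<sigma> \<A> X \<theta> \<longleftrightarrow>
     inj_on \<theta> (carrier \<A>) \<and>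
     (\<forall>a\<in>carrier \<A>. \<theta> a \<subseteq> X \<times> X \<and> single_valued (\<theta> a)) \<and>
     (AntiRes \<in> \<sigma> \<longrightarrow> (\<forall>a\<in>carrier \<A>. \<forall>b\<in>carrier \<A>.
        \<theta> (antires \<A> a b) = pf_antires (\<theta> a) (\<theta> b))) \<and>
     (Comp \<in> \<sigma> \<longrightarrow> (\<forall>a\<in>carrier \<A>. \<forall>b\<in>carrier \<A>.
        \<theta> (comp \<A> a b) = \<theta> a O \<theta> b)) \<and>
     (Meet \<in> \<sigma> \<longrightarrow> (\<forall>a\<in>carrier \<A>. \<forall>b\<in>carrier \<A>.
        \<theta> (meet \<A> a b) = \<theta> a \<inter> \<theta> b)) \<and>
     (Upd \<in> \<sigma> \<longrightarrow> (\<forall>a\<in>carrier \<A>. \<forall>b\<in>carrier \<A>.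
        \<theta> (upd \<A> a b) = pf_upd (\<theta> a) (\<theta> b))) \<and>
     (PrefUnion \<in> \<sigma> \<longrightarrow> (\<forall>a\<in>carrier \<A>. \<forall>b\<in>carrier \<A>.
        \<theta> (punion \<A> a b) = pf_punion (\<theta> a) (\<theta> b))) \<and>
     (DomOp \<in> \<sigma> \<longrightarrow> (\<forall>a\<in>carrier \<A>. \<theta> (dom_op \<A> a) = pf_dom (\<theta> a))) \<and>
     (AntiDomOp \<in> \<sigma> \<longrightarrow> (\<forall>a\<in>carrier \<A>. \<theta> (adom_op \<A> a) = pf_adom X (\<theta> a)))"

definition alg_zero :: "'a alg \<Rightarrow> 'a \<Rightarrow> 'a" where
  "alg_zero \<A> a = antires \<A> a a"

definition alg_leq :: "'a alg \<Rightarrow> 'a \<Rightarrow> 'a \<Rightarrow> bool" where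
  "alg_leq \<A> a b \<longleftrightarrow> antires \<A> (antires \<A> a b) b = a"

definition is_atom :: "'a alg \<Rightarrow> 'a \<Rightarrow> bool" where
  "is_atom \<A> b \<longleftrightarrow> b \<in> carrier \<A> \<and> b \<noteq> alg_zero \<A> b \<and>
     (\<forall>c\<in>carrier \<A>. alg_leq \<A> c b \<and> c \<noteq> alg_zero \<A> c \<longrightarrow> c = b)"

definition atomic_rep :: "'a alg \<Rightarrow> ('a \<Rightarrow> ('x \<times> 'x) set) \<Rightarrow> bool" where
  "atomic_rep \<A> \<theta> \<longleftrightarrow>
     (\<forall>a\<in>carrier \<A>. \<forall>p\<in>\<theta> a. \<exists>b\<in>carrier \<A>. is_atom \<A> b \<and> alg_leq \<A> b a \<and> p \<in> \<theta> b)"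

definition down :: "'a alg \<Rightarrow> 'a \<Rightarrow> 'a set" where
  "down \<A> a = {b \<in> carrier \<A>. alg_leq \<A> b a}"

definition is_join_in :: "'a alg \<Rightarrow> 'a set \<Rightarrow> 'a set \<Rightarrow> 'a \<Rightarrow> bool" where
  "is_join_in \<A> D S j \<longleftrightarrow> j \<in> D \<and> (\<forall>s\<in>S. alg_leq \<A> s j) \<and>
     (\<forall>u\<in>D. (\<forall>s\<in>S. alg_leq \<A> s u) \<longrightarrow> alg_leq \<A> j u)"

definition is_meet_in :: "'a alg \<Rightarrow> 'a set \<Rightarrow> 'a set \<Rightarrow> 'a \<Rightarrow> bool" where
  "is_meet_in \<A> D S m \<longleftrightarrow> m \<in> D \<and> (\<forall>s\<in>S. alg_leq \<A> m s) \<and>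
     (\<forall>l\<in>D. (\<forall>s\<in>S. alg_leq \<A> l s) \<longrightarrow> alg_leq \<A> l m)"

definition locally_complete_rep :: "'a alg \<Rightarrow> ('a \<Rightarrow> ('x \<times> 'x) set) \<Rightarrow> bool" where
  "locally_complete_rep \<A> \<theta> \<longleftrightarrow>
     (\<forall>a\<in>carrier \<A>.
        (\<forall>S j. S \<subseteq> down \<A> a \<and> is_join_in \<A> (down \<A> a) S j \<longrightarrow> \<theta> j = (\<Union>s\<in>S. \<theta> s)) \<and>
        (\<forall>S m. S \<subseteq> down \<A> a \<and> S \<noteq> {} \<and> is_meet_in \<A> (down \<A> a) S m \<longrightarrow>
            \<theta> m = (\<Inter>s\<in>S. \<theta> s)))"

end

theory Submission
  imports Defs
begin

locale prep =
  fixes \<sigma> :: "opsym set" and \<A> :: "'a alg" and X :: "'x set"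
    and \<theta> :: "'a \<Rightarrow> ('x \<times> 'x) set"
  assumes AR: "AntiRes \<in> \<sigma>"
    and SA: "sigma_algebra \<sigma> \<A>"
    and PR: "pf_representation \<sigma> \<A> X \<theta>"
begin

lemma cl: "a \<in> carrier \<A> \<Longrightarrow> b \<in> carrier \<A> \<Longrightarrow> antires \<A> a b \<in> carrier \<A>"
  using AR SA unfolding sigma_algebra_def by blast

lemma th: "a \<in> carrier \<A> \<Longrightarrow> b \<in> carrier \<A> \<Longrightarrow>
   \<theta> (antires \<A> a b) = {q \<in> \<theta> b. fst q \<notin> Domain (\<theta> a)}"
  using AR PR unfolding pf_representation_def pf_antires_def by auto

lemma sv: "a \<in> carrier \<A> \<Longrightarrow> (x,y) \<in> \<theta> a \<Longrightarrow> (x,y') \<in> \<theta> a \<Longrightarrow> y = y'"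
  using PR unfolding pf_representation_def by (meson single_valuedD)

lemma injt: "a \<in> carrier \<A> \<Longrightarrow> b \<in> carrier \<A> \<Longrightarrow> \<theta> a = \<theta> b \<Longrightarrow> a = b"
  using PR unfolding pf_representation_def by (meson inj_onD)

lemma th2: "a \<in> carrier \<A> \<Longrightarrow> b \<in> carrier \<A> \<Longrightarrow>
   \<theta> (antires \<A> (antires \<A> b a) a) = {q \<in> \<theta> a. fst q \<in> Domain (\<theta> b)}"
proof -
  assume a: "a \<in> carrier \<A>" and b: "b \<in> carrier \<A>"
  have "\<theta> (antires \<A> (antires \<A> b a) a) = {q \<in> \<theta> a. fst q \<notin> Domain (\<theta> (antires \<A> b a))}"
    using th[OF cl[OF b a] a] .
  also have "\<theta> (antires \<A> b a) = {q \<in> \<theta> a. fst q \<notin> Domain (\<theta> b)}" using th[OF b a] .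
  finally show ?thesis by (auto simp: Domain_iff)
qed

lemma leq: assumes "a \<in> carrier \<A>" "b \<in> carrier \<A>"
  shows "alg_leq \<A> b a \<longleftrightarrow> \<theta> b \<subseteq> \<theta> a"
proof
  assume "alg_leq \<A> b a"
  hence "\<theta> (antires \<A> (antires \<A> b a) a) = \<theta> b" unfolding alg_leq_def by simp
  thus "\<theta> b \<subseteq> \<theta> a" using th2[OF assms] by auto
next
  assume s: "\<theta> b \<subseteq> \<theta> a"
  have "\<theta> (antires \<A> (antires \<A> b a) a) = \<theta> b"
  proof -
    have "{q \<in> \<theta> a. fst q \<in> Domain (\<theta> b)} = \<theta> b"
    proof (intro equalityI subsetI)
      fix q assume "q \<in> {q \<in> \<theta> a. fst q \<in> Domain (\<theta> b)}"
      then obtain x y y' where q: "q = (x,y)" "(x,y) \<in> \<theta> a" "(x,y') \<in> \<theta> b" by (cases q) auto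
      hence "(x,y') \<in> \<theta> a" using s by auto
      hence "y = y'" using sv[OF assms(1) q(2)] by simp
      thus "q \<in> \<theta> b" using q by simp
    next
      fix q assume "q \<in> \<theta> b" thus "q \<in> {q \<in> \<theta> a. fst q \<in> Domain (\<theta> b)}"
        using s by (cases q) auto
    qed
    thus ?thesis using th2[OF assms] by simp
  qed
  thus "alg_leq \<A> b a" unfolding alg_leq_def using injt[OF cl[OF cl[OF assms(2,1)] assms(1)] assms(2)] by simp
qed

lemma zero: assumes "c \<in> carrier \<A>" shows "c = alg_zero \<A> c \<longleftrightarrow> \<theta> c = {}"
proof -
  have z: "\<theta> (alg_zero \<A> c) = {}" unfolding alg_zero_def using th[OF assms assms] by auto
  show ?thesis
  proof
    assume "c = alg_zero \<A> c" thus "\<theta> c = {}" using z by metis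
  next
    assume "\<theta> c = {}" thus "c = alg_zero \<A> c"
      using z injt[OF assms cl[OF assms assms]] unfolding alg_zero_def by simp
  qed
qed


lemma atomic_lc: assumes "atomic_rep \<A> \<theta>" shows "locally_complete_rep \<A> \<theta>"
  unfolding locally_complete_rep_def
proof (intro ballI conjI allI impI)
  fix a assume aC: "a \<in> carrier \<A>"
  fix S j assume H: "S \<subseteq> down \<A> a \<and> is_join_in \<A> (down \<A> a) S j"
  have jC: "j \<in> carrier \<A>" and ja: "\<theta> j \<subseteq> \<theta> a"
    using H aC leq unfolding is_join_in_def down_def by auto
  have SC: "\<And>s. s \<in> S \<Longrightarrow> s \<in> carrier \<A>" using H unfolding down_def by auto
  have sj: "\<And>s. s \<in> S \<Longrightarrow> \<theta> s \<subseteq> \<theta> j"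
    using H SC jC leq unfolding is_join_in_def by blast
  show "\<theta> j = (\<Union>s\<in>S. \<theta> s)"
  proof (rule ccontr)
    assume "\<theta> j \<noteq> (\<Union>s\<in>S. \<theta> s)"
    then obtain p where pj: "p \<in> \<theta> j" and pn: "\<And>s. s \<in> S \<Longrightarrow> p \<notin> \<theta> s" using sj by blast
    obtain b where bC: "b \<in> carrier \<A>" and bat: "is_atom \<A> b" and bj: "alg_leq \<A> b j"
      and pb: "p \<in> \<theta> b" using assms jC pj unfolding atomic_rep_def by blast
    have bj': "\<theta> b \<subseteq> \<theta> j" using bj leq jC bC by blast
    have disj: "\<And>s q. s \<in> S \<Longrightarrow> q \<in> \<theta> s \<Longrightarrow> fst q \<notin> Domain (\<theta> b)"
    proof
      fix s q assume sS: "s \<in> S" and q: "q \<in> \<theta> s" and qd: "fst q \<in> Domain (\<theta> b)"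
      define r where "r = antires \<A> (antires \<A> b s) s"
      have rC: "r \<in> carrier \<A>" unfolding r_def using cl bC SC sS by blast
      have tr: "\<theta> r = {q \<in> \<theta> s. fst q \<in> Domain (\<theta> b)}" unfolding r_def using th2 bC SC sS by blast
      have rb: "\<theta> r \<subseteq> \<theta> b"
      proof
        fix z assume "z \<in> \<theta> r"
        then obtain x y y' where z: "z = (x,y)" "(x,y) \<in> \<theta> s" "(x,y') \<in> \<theta> b" using tr by (cases z) auto
        have "y = y'" using sv[OF jC, of x y y'] z sj[OF sS] bj' by blast
        thus "z \<in> \<theta> b" using z by simp
      qed
      have "q \<in> \<theta> r" using tr q qd by simp
      hence "\<theta> r \<noteq> {}" by blast
      hence "r = b" using bat rC rb leq bC zero unfolding is_atom_def by blast
      hence "\<theta> b \<subseteq> \<theta> s" using tr by auto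
      thus False using pn sS pb by blast
    qed
    define u where "u = antires \<A> b j"
    have uC: "u \<in> carrier \<A>" unfolding u_def using cl bC jC by blast
    have tu: "\<theta> u = {q \<in> \<theta> j. fst q \<notin> Domain (\<theta> b)}" unfolding u_def using th bC jC by blast
    have ud: "u \<in> down \<A> a" unfolding down_def using uC leq aC tu ja by auto
    have "\<forall>s\<in>S. alg_leq \<A> s u"
    proof
      fix s assume sS: "s \<in> S"
      have "\<theta> s \<subseteq> \<theta> u"
      proof
        fix z assume z: "z \<in> \<theta> s"
        have "z \<in> \<theta> j" "fst z \<notin> Domain (\<theta> b)" using z sj[OF sS] disj[OF sS z] by auto
        thus "z \<in> \<theta> u" unfolding tu by simp
      qed
      thus "alg_leq \<A> s u" using leq uC SC sS by blast
    qed
    hence "alg_leq \<A> j u" using H ud unfolding is_join_in_def by blast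
    hence "\<theta> j \<subseteq> \<theta> u" using leq uC jC by blast
    moreover have "fst p \<in> Domain (\<theta> b)" using pb by (cases p) auto
    ultimately show False using pj tu by blast
  qed
next
  fix a assume aC: "a \<in> carrier \<A>"
  fix S m assume H: "S \<subseteq> down \<A> a \<and> S \<noteq> {} \<and> is_meet_in \<A> (down \<A> a) S m"
  have mC: "m \<in> carrier \<A>" using H unfolding is_meet_in_def down_def by auto
  have SC: "\<And>s. s \<in> S \<Longrightarrow> s \<in> carrier \<A>" and Sa: "\<And>s. s \<in> S \<Longrightarrow> \<theta> s \<subseteq> \<theta> a"
    using H aC leq unfolding down_def by auto
  have ms: "\<And>s. s \<in> S \<Longrightarrow> \<theta> m \<subseteq> \<theta> s"
    using H SC mC leq unfolding is_meet_in_def by blast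
  show "\<theta> m = (\<Inter>s\<in>S. \<theta> s)"
  proof
    show "\<theta> m \<subseteq> (\<Inter>s\<in>S. \<theta> s)" using ms by blast
  next
    show "(\<Inter>s\<in>S. \<theta> s) \<subseteq> \<theta> m"
    proof
      fix p assume pI: "p \<in> (\<Inter>s\<in>S. \<theta> s)"
      obtain s0 where s0: "s0 \<in> S" using H by blast
      obtain b where bC: "b \<in> carrier \<A>" and bat: "is_atom \<A> b" and bs0: "alg_leq \<A> b s0"
        and pb: "p \<in> \<theta> b" using assms SC[OF s0] pI s0 unfolding atomic_rep_def by blast
      have bs0': "\<theta> b \<subseteq> \<theta> s0" using bs0 leq SC[OF s0] bC by blast
      have bS: "\<forall>s\<in>S. alg_leq \<A> b s"
      proof
        fix s assume sS: "s \<in> S"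
        define r where "r = antires \<A> (antires \<A> b s) s"
        have rC: "r \<in> carrier \<A>" unfolding r_def using cl bC SC sS by blast
        have tr: "\<theta> r = {q \<in> \<theta> s. fst q \<in> Domain (\<theta> b)}" unfolding r_def using th2 bC SC sS by blast
        have rb: "\<theta> r \<subseteq> \<theta> b"
        proof
          fix z assume "z \<in> \<theta> r"
          then obtain x y y' where z: "z = (x,y)" "(x,y) \<in> \<theta> s" "(x,y') \<in> \<theta> b" using tr by (cases z) auto
          have "y = y'" using sv[OF aC, of x y y'] z Sa[OF sS] Sa[OF s0] bs0' by blast
          thus "z \<in> \<theta> b" using z by simp
        qed
        have "p \<in> \<theta> r" using tr pI sS pb by (cases p) auto
        hence "r = b" using bat rC rb leq bC zero unfolding is_atom_def by blast
        hence "\<theta> b \<subseteq> \<theta> s" using tr by auto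
        thus "alg_leq \<A> b s" using leq bC SC sS by blast
      qed
      have "b \<in> down \<A> a" unfolding down_def using bC leq aC bs0' Sa[OF s0] by auto
      hence "alg_leq \<A> b m" using H bS unfolding is_meet_in_def by blast
      thus "p \<in> \<theta> m" using leq mC bC pb by blast
    qed
  qed
qed

lemma lc_atomic: assumes LC: "locally_complete_rep \<A> \<theta>" shows "atomic_rep \<A> \<theta>"
  unfolding atomic_rep_def
proof (intro ballI)
  fix a p assume aC: "a \<in> carrier \<A>" and pa: "p \<in> \<theta> a"
  show "\<exists>b\<in>carrier \<A>. is_atom \<A> b \<and> alg_leq \<A> b a \<and> p \<in> \<theta> b"
  proof (rule ccontr)
    assume NA: "\<not> ?thesis"
    define T where "T = {c \<in> down \<A> a. p \<notin> \<theta> c}"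
    have TC: "\<And>c. c \<in> T \<Longrightarrow> c \<in> carrier \<A> \<and> \<theta> c \<subseteq> \<theta> a" unfolding T_def down_def using leq aC by auto
    have ad: "a \<in> down \<A> a" unfolding down_def using aC leq by auto
    have "is_join_in \<A> (down \<A> a) T a"
      unfolding is_join_in_def
    proof (intro conjI ballI impI)
      show "a \<in> down \<A> a" by (rule ad)
    next
      fix s assume "s \<in> T" thus "alg_leq \<A> s a" unfolding T_def down_def by auto
    next
      fix u assume ud: "u \<in> down \<A> a" and ub: "\<forall>s\<in>T. alg_leq \<A> s u"
      have uC: "u \<in> carrier \<A>" and ua: "\<theta> u \<subseteq> \<theta> a" using ud leq aC unfolding down_def by auto
      have Tu: "\<And>s. s \<in> T \<Longrightarrow> \<theta> s \<subseteq> \<theta> u" using ub TC leq uC by blast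
      define c where "c = antires \<A> u a"
      have cC: "c \<in> carrier \<A>" unfolding c_def using cl uC aC by blast
      have tc: "\<theta> c = {q \<in> \<theta> a. fst q \<notin> Domain (\<theta> u)}" unfolding c_def using th uC aC by blast
      have ca: "\<theta> c \<subseteq> \<theta> a" using tc by auto
      have cd: "c \<in> down \<A> a" unfolding down_def using cC leq aC ca by auto
      have empty_of: "\<And>e. e \<in> T \<Longrightarrow> \<theta> e \<subseteq> \<theta> c \<Longrightarrow> \<theta> e = {}"
      proof -
        fix e assume eT: "e \<in> T" and ec: "\<theta> e \<subseteq> \<theta> c"
        have "\<theta> e \<subseteq> \<theta> u" using Tu eT .
        show "\<theta> e = {}"
        proof (rule ccontr)
          assume "\<theta> e \<noteq> {}"
          then obtain q where "q \<in> \<theta> e" by blast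
          hence "q \<in> \<theta> u" "q \<in> \<theta> c" using \<open>\<theta> e \<subseteq> \<theta> u\<close> ec by auto
          thus False using tc by (cases q) auto
        qed
      qed
      show "alg_leq \<A> a u"
      proof (cases "p \<in> \<theta> c")
        case False
        hence "c \<in> T" using T_def cd by auto
        hence c0: "\<theta> c = {}" using empty_of by blast
        have "\<theta> a \<subseteq> \<theta> u"
        proof
          fix q assume qa: "q \<in> \<theta> a"
          obtain x y where q: "q = (x,y)" by (cases q)
          show "q \<in> \<theta> u"
          proof (cases "x \<in> Domain (\<theta> u)")
            case True
            then obtain y' where "(x,y') \<in> \<theta> u" by auto
            moreover hence "y = y'" using sv[OF aC, of x y y'] ua qa q by blast
            ultimately show ?thesis using q by simp
          next
            case False thus ?thesis using c0 tc qa q by auto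
          qed
        qed
        thus ?thesis using leq aC uC by blast
      next
        case True
        have "\<not> is_atom \<A> c" using NA cC ca leq aC True by blast
        moreover have "c \<noteq> alg_zero \<A> c" using zero cC True by auto
        ultimately obtain d where dC: "d \<in> carrier \<A>" and dc: "alg_leq \<A> d c"
          and dnz: "d \<noteq> alg_zero \<A> d" and dne: "d \<noteq> c"
          using cC unfolding is_atom_def by blast
        have dc': "\<theta> d \<subseteq> \<theta> c" using leq dC cC dc by blast
        have dnz': "\<theta> d \<noteq> {}" using zero dC dnz by blast
        have dne': "\<theta> d \<noteq> \<theta> c" using injt dC cC dne by blast
        define e2 where "e2 = antires \<A> d c"
        have e2C: "e2 \<in> carrier \<A>" unfolding e2_def using cl dC cC by blast
        have te2: "\<theta> e2 = {q \<in> \<theta> c. fst q \<notin> Domain (\<theta> d)}" unfolding e2_def using th dC cC by blast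
        have e2nz: "\<theta> e2 \<noteq> {}"
        proof
          assume e0: "\<theta> e2 = {}"
          have "\<theta> c \<subseteq> \<theta> d"
          proof
            fix q assume qc: "q \<in> \<theta> c"
            obtain x y where q: "q = (x,y)" by (cases q)
            have "x \<in> Domain (\<theta> d)" using e0 te2 qc q by auto
            then obtain y' where "(x,y') \<in> \<theta> d" by auto
            moreover hence "y = y'" using sv[OF cC, of x y y'] dc' qc q by blast
            ultimately show "q \<in> \<theta> d" using q by simp
          qed
          thus False using dc' dne' by blast
        qed
        obtain e where eC: "e \<in> carrier \<A>" and ec: "\<theta> e \<subseteq> \<theta> c" and enz: "\<theta> e \<noteq> {}"
          and pe: "p \<notin> \<theta> e"
        proof (cases "p \<in> \<theta> d")
          case True
          hence "p \<notin> \<theta> e2" using te2 by (cases p) auto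
          thus ?thesis using that e2C te2 e2nz by auto
        next
          case False thus ?thesis using that dC dc' dnz' by auto
        qed
        have "e \<in> T" unfolding T_def down_def using eC ec ca leq aC pe by auto
        hence "\<theta> e = {}" using empty_of ec by blast
        thus ?thesis using enz by blast
      qed
    qed
    moreover have "T \<subseteq> down \<A> a" unfolding T_def by auto
    ultimately have "\<theta> a = (\<Union>s\<in>T. \<theta> s)" using LC aC unfolding locally_complete_rep_def by blast
    thus False using pa T_def by auto
  qed
qed

end

theorem proposition4p4:
  fixes \<sigma> :: "opsym set" and \<A> :: "'a alg" and X :: "'x set"
    and \<theta> :: "'a \<Rightarrow> ('x \<times> 'x) set"
  assumes "AntiRes \<in> \<sigma>"
    and "sigma_algebra \<sigma> \<A>"
    and "pf_representation \<sigma> \<A> X \<theta>"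
  shows "atomic_rep \<A> \<theta> \<longleftrightarrow> locally_complete_rep \<A> \<theta>"
proof -
  interpret prep \<sigma> \<A> X \<theta> using assms by (unfold_locales)
  show ?thesis using atomic_lc lc_atomic by blast
qed

end
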